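(* Let $f$ be an orientation-preserving homeomorphism of the circle $\mathbb T=\mathbb R/\mathbb Z$. Then ${\rm h_{pol}}(f)\in\{0,1\}$, and ${\rm h_{pol}}(f)=0$ if and only if $f$ is topologically conjugate to a rotation of $\mathbb T$.
   Context: For a continuous map $f:X\to X$ of a compact metric space $(X,d)$ define the dynamical metrics $d_n^f(x,y)=\max_{0\le k\le n-1}d(f^k(x),f^k(y))$. For $Y\subset X$ and $\varepsilon>0$ let $G_n^f(Y,\varepsilon)$ be the minimal number of $d_n^f$-balls of radius $\varepsilon$ needed to cover $Y$. The polynomial entropy of $f$ on $Y$ is ${\rm h_{pol}}(f,Y)=\lim_{\varepsilon\to0}\limsup_{n\to\infty}\frac{\log G_n^f(Y,\varepsilon)}{\log n}$, and ${\rm h_{pol}}(f)={\rm h_{pol}}(f,X)$. The circle carries its standard metric. A rotation of $\mathbb T$ is a map $\bar x\mapsto \bar x+\bar a$. *)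

theory Defs
  imports "HOL-Analysis.Analysis"
begin

text \<open>Points of R/Z are represented by their unique representative in [0,1).\<close>

typedef circle = "{x::real. 0 \<le> x \<and> x < 1}"
  by (rule exI[of _ 0]) simp

definition circ_proj :: "real \<Rightarrow> circle" where
  "circ_proj x = Abs_circle (frac x)"

lemma circle_rep_dist_aux:
  fixes u v w :: real
  assumes "0 \<le> u" "u < 1" "0 \<le> v" "v < 1" "0 \<le> w" "w < 1"
  shows "min \<bar>u - w\<bar> (1 - \<bar>u - w\<bar>) \<le> min \<bar>u - v\<bar> (1 - \<bar>u - v\<bar>) + min \<bar>w - v\<bar> (1 - \<bar>w - v\<bar>)"
  using assms by (simp add: min_def abs_if split: if_splits) linarith?

instantiation circle :: metric_space
begin

text \<open>Standard metric of R/Z: distance to the nearest integer of the difference.\<close>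
definition dist_circle :: "circle \<Rightarrow> circle \<Rightarrow> real" where
  "dist_circle a b = min \<bar>Rep_circle a - Rep_circle b\<bar> (1 - \<bar>Rep_circle a - Rep_circle b\<bar>)"

definition uniformity_circle :: "(circle \<times> circle) filter" where
  "uniformity_circle = (INF e\<in>{0<..}. principal {(x, y). dist x y < e})"

definition open_circle :: "circle set \<Rightarrow> bool" where
  "open_circle U = (\<forall>x\<in>U. \<forall>\<^sub>F (x', y) in uniformity. x' = x \<longrightarrow> y \<in> U)"

instance
proof
  fix x y z :: circle
  have rx: "0 \<le> Rep_circle x" "Rep_circle x < 1" using Rep_circle[of x] by auto
  have ry: "0 \<le> Rep_circle y" "Rep_circle y < 1" using Rep_circle[of y] by auto
  have rz: "0 \<le> Rep_circle z" "Rep_circle z < 1" using Rep_circle[of z] by auto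
  show "(dist x y = 0) = (x = y)"
    using rx ry by (auto simp: dist_circle_def min_def Rep_circle_inject[symmetric] split: if_splits)
  show "dist x y \<le> dist x z + dist y z"
    unfolding dist_circle_def using circle_rep_dist_aux[OF rx rz ry] by (simp add: abs_minus_commute)
qed (simp_all add: uniformity_circle_def open_circle_def)

end

definition dyn_dist :: "('a::metric_space \<Rightarrow> 'a) \<Rightarrow> nat \<Rightarrow> 'a \<Rightarrow> 'a \<Rightarrow> real" where
  "dyn_dist f n x y = (MAX k\<in>{..<n}. dist ((f ^^ k) x) ((f ^^ k) y))"

definition cover_num :: "('a::metric_space \<Rightarrow> 'a) \<Rightarrow> 'a set \<Rightarrow> nat \<Rightarrow> real \<Rightarrow> nat" where
  "cover_num f Y n \<epsilon> = (LEAST m. \<exists>C. finite C \<and> card C = m \<and>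
       Y \<subseteq> (\<Union>c\<in>C. {y. dyn_dist f n c y < \<epsilon>}))"

definition hpol_on :: "('a::metric_space \<Rightarrow> 'a) \<Rightarrow> 'a set \<Rightarrow> ereal" where
  "hpol_on f Y = Lim (at_right (0::real))
     (\<lambda>\<epsilon>. limsup (\<lambda>n. ereal (ln (real (cover_num f Y n \<epsilon>)) / ln (real n))))"

definition hpol :: "('a::metric_space \<Rightarrow> 'a) \<Rightarrow> ereal" where
  "hpol f = hpol_on f UNIV"

definition orientation_preserving_homeo :: "(circle \<Rightarrow> circle) \<Rightarrow> bool" where
  "orientation_preserving_homeo f \<longleftrightarrow>
     (\<exists>g. homeomorphism UNIV UNIV f g) \<and>
     (\<exists>F::real \<Rightarrow> real. continuous_on UNIV F \<and> strict_mono F \<and> (\<forall>x. F (x + 1) = F x + 1) \<and>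
        (\<forall>x. f (circ_proj x) = circ_proj (F x)))"

definition is_rotation :: "(circle \<Rightarrow> circle) \<Rightarrow> bool" where
  "is_rotation g \<longleftrightarrow> (\<exists>a::real. \<forall>x. g (circ_proj x) = circ_proj (x + a))"

definition top_conjugate :: "('a::topological_space \<Rightarrow> 'a) \<Rightarrow> ('b::topological_space \<Rightarrow> 'b) \<Rightarrow> bool" where
  "top_conjugate f g \<longleftrightarrow> (\<exists>h h'. homeomorphism UNIV UNIV h h' \<and> h \<circ> f = g \<circ> h)"

end

theory Submission
  imports Defs "HOL-Analysis.Kronecker_Approximation_Theorem" "HOL-Real_Asymp.Real_Asymp"
begin


lemma Rep_cp: "Rep_circle (circ_proj x) = frac x"
  unfolding circ_proj_def by (rule Abs_circle_inverse) (simp add: frac_lt_1)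

lemma cp_Rep: "circ_proj (Rep_circle c) = c"
proof -
  have "frac (Rep_circle c) = Rep_circle c" using Rep_circle[of c] by (simp add: frac_eq)
  then show ?thesis unfolding circ_proj_def by (simp add: Rep_circle_inverse)
qed

lemma cp_surj: "\<exists>x. c = circ_proj x"
  using cp_Rep by metis

lemma cp_add_int: "circ_proj (a + of_int m) = circ_proj a"
  unfolding circ_proj_def by simp

lemma cp_eq_iff: "circ_proj a = circ_proj b \<longleftrightarrow> (\<exists>m::int. a = b + of_int m)"
proof
  assume "circ_proj a = circ_proj b"
  then have "frac a = frac b" by (metis Rep_cp)
  then have "a = b + of_int (\<lfloor>a\<rfloor> - \<lfloor>b\<rfloor>)" by (simp add: frac_def)
  then show "\<exists>m::int. a = b + of_int m" by blast
qed (auto simp: cp_add_int)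

lemma dist_cp: "dist (circ_proj a) (circ_proj b) = min \<bar>frac a - frac b\<bar> (1 - \<bar>frac a - frac b\<bar>)"
  by (simp add: dist_circle_def Rep_cp)

lemma dist_cp_le: "dist (circ_proj a) (circ_proj b) \<le> \<bar>a - b - of_int m\<bar>"
proof -
  define d where "d = frac a - frac b"
  define j where "j = m - (\<lfloor>a\<rfloor> - \<lfloor>b\<rfloor>)"
  have d: "\<bar>d\<bar> < 1" unfolding d_def using frac_lt_1[of a] frac_lt_1[of b] frac_ge_0[of a] frac_ge_0[of b] by linarith
  have e: "a - b - of_int m = d - of_int j" unfolding d_def j_def frac_def by simp
  have "min \<bar>d\<bar> (1 - \<bar>d\<bar>) \<le> \<bar>d - of_int j\<bar>"
  proof (cases "j = 0")
    case False
    then have "\<bar>real_of_int j\<bar> \<ge> 1" by linarith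
    then show ?thesis using d by linarith
  qed simp
  then show ?thesis using e by (simp add: dist_cp d_def)
qed

lemma dist_cp_le0: "dist (circ_proj a) (circ_proj b) \<le> \<bar>a - b\<bar>"
  using dist_cp_le[of a b 0] by simp

lemma dist_cp_eq: "\<exists>m::int. dist (circ_proj a) (circ_proj b) = \<bar>a - b - of_int m\<bar>"
proof -
  define d where "d = frac a - frac b"
  define j where "j = \<lfloor>a\<rfloor> - \<lfloor>b\<rfloor>"
  have d: "\<bar>d\<bar> < 1" unfolding d_def using frac_lt_1[of a] frac_lt_1[of b] frac_ge_0[of a] frac_ge_0[of b] by linarith
  have e: "a - b - of_int j = d" unfolding d_def j_def frac_def by simp
  have dd: "dist (circ_proj a) (circ_proj b) = min \<bar>d\<bar> (1 - \<bar>d\<bar>)" by (simp add: dist_cp d_def)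
  show ?thesis
  proof (cases "\<bar>d\<bar> \<le> 1 - \<bar>d\<bar>")
    case True then show ?thesis using dd e by (intro exI[of _ j]) simp
  next
    case False
    show ?thesis
    proof (cases "d \<ge> 0")
      case True
      have "a - b - of_int (j+1) = d - 1" using e by simp
      then show ?thesis using dd False True d by (intro exI[of _ "j+1"]) (simp add: abs_if)
    next
      case F: False
      have "a - b - of_int (j-1) = d + 1" using e by simp
      then show ?thesis using dd False F d by (intro exI[of _ "j-1"]) (simp add: abs_if)
    qed
  qed
qed

lemma dist_cp_ge:
  assumes "\<And>m::int. \<bar>a - b - of_int m\<bar> \<ge> r"
  shows "dist (circ_proj a) (circ_proj b) \<ge> r"
  using dist_cp_eq[of a b] assms by metis

lemma dist_cp_shift: "dist (circ_proj (a + c)) (circ_proj (b + c)) = dist (circ_proj a) (circ_proj b)"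
proof -
  obtain m where m: "dist (circ_proj a) (circ_proj b) = \<bar>a - b - of_int m\<bar>" using dist_cp_eq by blast
  obtain m' where m': "dist (circ_proj (a+c)) (circ_proj (b+c)) = \<bar>a + c - (b + c) - of_int m'\<bar>" using dist_cp_eq by blast
  have "dist (circ_proj (a+c)) (circ_proj (b+c)) \<le> \<bar>a + c - (b + c) - of_int m\<bar>" by (rule dist_cp_le)
  moreover have "dist (circ_proj a) (circ_proj b) \<le> \<bar>a - b - of_int m'\<bar>" by (rule dist_cp_le)
  ultimately show ?thesis using m m' by simp
qed

lemma continuous_cp: "continuous_on A circ_proj"
  unfolding continuous_on_iff
  by (metis dist_cp_le0 dist_real_def le_less_trans)

lemma compact_circle: "compact (UNIV :: circle set)"
proof -
  have "c \<in> circ_proj ` {0..1}" for c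
    using cp_Rep[of c] Rep_circle[of c] by (metis atLeastAtMost_iff image_eqI less_eq_real_def mem_Collect_eq)
  then have "UNIV = circ_proj ` {0..1}" by auto
  then show ?thesis using compact_continuous_image[OF continuous_cp compact_Icc] by metis
qed




locale lift =
  fixes F :: "real \<Rightarrow> real"
  assumes contF: "continuous_on UNIV F" and smF: "strict_mono F" and perF: "\<And>x. F (x + 1) = F x + 1"
begin

lemma F_int: "F (x + of_int m) = F x + of_int m"
proof (induction m arbitrary: x rule: int_induct[where k=0])
  case base then show ?case by simp
next
  case (step1 i) then show ?case using perF[of "x + of_int i"] by (simp add: add.assoc)
next
  case (step2 i)
  have "F (x + of_int (i - 1) + 1) = F (x + of_int (i-1)) + 1" by (rule perF)
  then show ?case using step2(2)[of x] by (simp add: algebra_simps)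
qed

lemma Fk_int: "(F^^k) (x + of_int m) = (F^^k) x + of_int m"
  by (induction k arbitrary: x) (simp_all add: F_int)

lemma Fk_1: "(F^^k) (x + 1) = (F^^k) x + 1"
  using Fk_int[of k x 1] by simp

lemma Fk_sm: "strict_mono (F^^k)"
  by (induction k) (auto simp: strict_mono_def smF[THEN strict_monoD])

lemma Fk_le: "x \<le> y \<Longrightarrow> (F^^k) x \<le> (F^^k) y"
  using Fk_sm strict_mono_less_eq by blast

lemma Fk_less: "x < y \<Longrightarrow> (F^^k) x < (F^^k) y"
  using Fk_sm strict_monoD by blast

lemma Fk_cont: "continuous_on A (F^^k)"
proof (induction k)
  case 0 then show ?case by (simp add: continuous_on_id)
next
  case (Suc k)
  have "continuous_on A (F \<circ> (F^^k))"
    by (rule continuous_on_compose[OF Suc]) (rule continuous_on_subset[OF contF], simp)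
  then show ?case by simp
qed

lemma disp: "\<bar>((F^^n) y - y) - ((F^^n) x - x)\<bar> < 1"
proof -
  define m where "m = \<lfloor>y - x\<rfloor>"
  define y' where "y' = y - of_int m"
  have y': "x \<le> y'" "y' < x + 1" unfolding y'_def m_def by linarith+
  have "(F^^n) y = (F^^n) (y' + of_int m)" by (simp add: y'_def)
  then have e: "(F^^n) y - y = (F^^n) y' - y'" by (simp only: Fk_int) (simp add: y'_def)
  have "(F^^n) x \<le> (F^^n) y'" using Fk_le y' by blast
  moreover have "(F^^n) y' < (F^^n) x + 1" using Fk_less[OF y'(2)] Fk_1 by simp
  ultimately show ?thesis using e y' by linarith
qed

lemma rho_exists: "\<exists>\<rho>. \<forall>n x. \<bar>(F^^n) x - x - real n * \<rho>\<bar> < 2"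
proof -
  define b where "b n = (F^^n) 0 - 1" for n
  define c where "c n = (F^^n) 0 + 1" for n
  have add: "b n + b k \<le> b (n + k) \<and> c (n + k) \<le> c n + c k" for n k
  proof -
    have "(F^^(n+k)) 0 = (F^^n) ((F^^k) 0)" by (simp add: funpow_add)
    moreover have "\<bar>((F^^n) ((F^^k) 0) - (F^^k) 0) - ((F^^n) 0 - 0)\<bar> < 1" by (rule disp)
    ultimately show ?thesis unfolding b_def c_def by linarith
  qed
  have bm: "real k * b n \<le> b (n * k)" if "k \<ge> 1" for n k
    using that
  proof (induction k rule: dec_induct)
    case base then show ?case by simp
  next
    case (step k)
    have "b (n * k) + b n \<le> b (n * k + n)" using add by blast
    then show ?case using step by (simp add: algebra_simps)
  qed
  have cm: "c (n * k) \<le> real n * c k" if "n \<ge> 1" for n k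
    using that
  proof (induction n rule: dec_induct)
    case base then show ?case by simp
  next
    case (step n)
    have "c (n * k + k) \<le> c (n * k) + c k" using add by blast
    then show ?case using step by (simp add: algebra_simps)
  qed
  have bc: "b n / real n \<le> c k / real k" if "n \<ge> 1" "k \<ge> 1" for n k
  proof -
    have "real k * b n \<le> real n * c k"
      using bm[OF that(2), of n] cm[OF that(1), of k] unfolding b_def c_def by (simp add: mult.commute)
    then show ?thesis using that by (simp add: field_simps)
  qed
  define \<rho> where "\<rho> = (SUP n\<in>{1..}. b n / real n)"
  have bdd: "bdd_above ((\<lambda>n. b n / real n) ` {1..})"
    using bc[of _ 1] by (auto intro!: bdd_aboveI[of _ "c 1"])
  have lo: "b n \<le> real n * \<rho>" if "n \<ge> 1" for n
  proof -
    have "b n / real n \<le> \<rho>" unfolding \<rho>_def by (rule cSUP_upper[OF _ bdd]) (use that in simp)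
    then show ?thesis using that by (simp add: field_simps)
  qed
  have hi: "real k * \<rho> \<le> c k" if "k \<ge> 1" for k
  proof -
    have "\<rho> \<le> c k / real k" unfolding \<rho>_def by (rule cSUP_least) (use that bc in auto)
    then show ?thesis using that by (simp add: field_simps)
  qed
  have "\<bar>(F^^n) x - x - real n * \<rho>\<bar> < 2" for n x
  proof (cases "n = 0")
    case True then show ?thesis by simp
  next
    case False
    then have "n \<ge> 1" by simp
    from lo[OF this] hi[OF this] have "\<bar>(F^^n) 0 - real n * \<rho>\<bar> \<le> 1" unfolding b_def c_def by linarith
    moreover have "\<bar>((F^^n) x - x) - ((F^^n) 0 - 0)\<bar> < 1" by (rule disp)
    ultimately show ?thesis by linarith
  qed
  then show ?thesis by blast
qed

end



lemma funpow_sm: "strict_mono (G::real\<Rightarrow>real) \<Longrightarrow> strict_mono (G^^k)"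
  by (induction k) (auto simp: strict_mono_def)

lemma funpow_cont: "continuous_on UNIV (G::real\<Rightarrow>real) \<Longrightarrow> continuous_on UNIV (G^^k)"
proof (induction k)
  case 0 then show ?case by (simp add: continuous_on_id)
next
  case (Suc k)
  have "continuous_on UNIV (G \<circ> (G^^k))"
    by (rule continuous_on_compose[OF Suc(1)[OF Suc(2)]]) (rule continuous_on_subset[OF Suc(2)], simp)
  then show ?case by simp
qed

lemma funpow_int:
  fixes G :: "real \<Rightarrow> real"
  assumes "\<And>x m. G (x + of_int m) = G x + of_int m"
  shows "(G^^k) (x + of_int m) = (G^^k) x + (of_int m::real)"
  by (induction k arbitrary: x) (simp_all add: assms)

lemma wander_up:
  fixes G :: "real \<Rightarrow> real"
  assumes sm: "strict_mono G" and ct: "continuous_on UNIV G"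
    and tr: "\<And>x m. G (x + of_int m) = G x + of_int m"
    and bd: "\<And>k. (G^^k) z \<le> B" and gz: "G z > z"
    and k: "k \<ge> 1" and s: "s \<in> {z<..<G z}" and t: "t \<in> {z<..<G z}"
  shows "(G^^k) s \<noteq> t + of_int m"
proof -
  define X where "X k = (G^^k) z" for k
  have smk: "strict_mono (G^^k)" for k using funpow_sm[OF sm] .
  have Xs: "X (Suc k) = (G^^k) (G z)" for k unfolding X_def by (simp only: funpow_Suc_right o_apply)
  have inc: "incseq X"
  proof (rule incseq_SucI)
    fix k show "X k \<le> X (Suc k)" unfolding Xs unfolding X_def using smk[of k] gz
      by (simp add: strict_mono_less_eq)
  qed
  obtain L where L: "X \<longlonglongrightarrow> L" "\<forall>i. X i \<le> L" using incseq_convergent[OF inc, of B] bd X_def by auto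
  have "(\<lambda>i. G (X i)) \<longlonglongrightarrow> G L"
    using ct L(1) by (intro isCont_tendsto_compose[OF _ L(1)]) (simp add: continuous_on_eq_continuous_at)
  moreover have "(\<lambda>i. G (X i)) = (\<lambda>i. X (Suc i))" unfolding X_def by auto
  moreover have "(\<lambda>i. X (Suc i)) \<longlonglongrightarrow> L" using L(1) by (rule LIMSEQ_Suc)
  ultimately have GL: "G L = L" using LIMSEQ_unique by metis
  define n where "n = \<lfloor>L - z\<rfloor>"
  define w where "w = L - of_int n"
  have zL: "z \<le> L" using L(2)[rule_format, of 0] by (simp add: X_def)
  have w: "z \<le> w" "w < z + 1" unfolding w_def n_def by linarith+
  have Gw: "G w = w" unfolding w_def using tr[of L "-n"] GL by simp
  have Gkw: "(G^^j) w = w" for j by (induction j) (simp_all add: Gw)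
  have "(G^^k) s < (G^^k) (G z)" using smk s by (simp add: strict_mono_less)
  also have "\<dots> = (G^^(Suc k)) z" by (simp only: funpow_Suc_right o_apply)
  also have "\<dots> \<le> (G^^(Suc k)) w" using strict_mono_less_eq[OF smk[of "Suc k"], of z w] w(1) by blast
  finally have up: "(G^^k) s < t + 1" using Gkw Gw w t by simp
  have "(G^^k) s > (G^^k) z" using smk s by (simp add: strict_mono_less)
  moreover have "X 1 \<le> X k" using inc k by (simp add: incseq_def)
  ultimately have lo: "(G^^k) s > t" using t by (simp add: X_def)
  show ?thesis
  proof
    assume "(G^^k) s = t + of_int m"
    then have "(0::real) < of_int m" "of_int m < (1::real)" using up lo by linarith+
    then have "0 < m" "m < 1" by simp_all
    then show False by simp
  qed
qed

lemma wander_down: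
  fixes G :: "real \<Rightarrow> real"
  assumes sm: "strict_mono G" and ct: "continuous_on UNIV G"
    and tr: "\<And>x m. G (x + of_int m) = G x + of_int m"
    and bd: "\<And>k. (G^^k) z \<ge> B" and gz: "G z < z"
    and k: "k \<ge> 1" and s: "s \<in> {G z<..<z}" and t: "t \<in> {G z<..<z}"
  shows "(G^^k) s \<noteq> t + of_int m"
proof -
  define X where "X k = (G^^k) z" for k
  have smk: "strict_mono (G^^k)" for k using funpow_sm[OF sm] .
  have Xs: "X (Suc k) = (G^^k) (G z)" for k unfolding X_def by (simp only: funpow_Suc_right o_apply)
  have dec: "decseq X"
  proof (rule decseq_SucI)
    fix k show "X (Suc k) \<le> X k" unfolding Xs unfolding X_def using smk[of k] gz
      by (simp add: strict_mono_less_eq)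
  qed
  obtain L where L: "X \<longlonglongrightarrow> L" "\<forall>i. L \<le> X i" using decseq_convergent[OF dec, of B] bd X_def by auto
  have "(\<lambda>i. G (X i)) \<longlonglongrightarrow> G L"
    using ct L(1) by (intro isCont_tendsto_compose[OF _ L(1)]) (simp add: continuous_on_eq_continuous_at)
  moreover have "(\<lambda>i. G (X i)) = (\<lambda>i. X (Suc i))" unfolding X_def by auto
  moreover have "(\<lambda>i. X (Suc i)) \<longlonglongrightarrow> L" using L(1) by (rule LIMSEQ_Suc)
  ultimately have GL: "G L = L" using LIMSEQ_unique by metis
  define n where "n = \<lfloor>z - L\<rfloor>"
  define w where "w = L + of_int n"
  have zL: "L \<le> z" using L(2)[rule_format, of 0] by (simp add: X_def)
  have w: "w \<le> z" "z - 1 < w" unfolding w_def n_def by linarith+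
  have Gw: "G w = w" unfolding w_def using tr[of L "n"] GL by simp
  have Gkw: "(G^^j) w = w" for j by (induction j) (simp_all add: Gw)
  have "(G^^k) s > (G^^k) (G z)" using smk s by (simp add: strict_mono_less)
  moreover have "(G^^k) (G z) = (G^^(Suc k)) z" by (simp only: funpow_Suc_right o_apply)
  moreover have "(G^^(Suc k)) w \<le> (G^^(Suc k)) z" using strict_mono_less_eq[OF smk[of "Suc k"], of w z] w(1) by blast
  ultimately have lo: "(G^^k) s > t - 1" using Gkw Gw w t by simp
  have "(G^^k) s < (G^^k) z" using smk s by (simp add: strict_mono_less)
  moreover have "X k \<le> X 1" using dec k by (simp add: decseq_def)
  ultimately have up: "(G^^k) s < t" using t by (simp add: X_def)
  show ?thesis
  proof
    assume "(G^^k) s = t + of_int m"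
    then have "of_int m < (0::real)" "-1 < (of_int m::real)" using up lo by linarith+
    then have "m < 0" "-1 < m" by simp_all
    then show False by simp
  qed
qed




definition wandering :: "(real \<Rightarrow> real) \<Rightarrow> nat \<Rightarrow> real \<Rightarrow> real \<Rightarrow> bool" where
  "wandering F q u v \<longleftrightarrow> q \<ge> 1 \<and> u < v \<and>
     (\<forall>k\<ge>1. \<forall>s\<in>{u<..<v}. \<forall>t\<in>{u<..<v}. \<forall>m::int. (F^^(q*k)) s \<noteq> t + of_int m)"

definition good_conj :: "(real \<Rightarrow> real) \<Rightarrow> bool" where
  "good_conj F \<longleftrightarrow> (\<exists>(H::real\<Rightarrow>real) \<rho>. continuous_on UNIV H \<and> strict_mono H \<and> (\<forall>x. H (x+1) = H x + 1)
       \<and> (\<forall>x. H (F x) = H x + \<rho>))"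

context lift
begin

lemma rational_case:
  assumes rho: "\<And>n x. \<bar>(F^^n) x - x - real n * \<rho>\<bar> < 2" and q: "q \<ge> 1" and qp: "real q * \<rho> = of_int p"
  shows "good_conj F \<or> (\<exists>q u v. wandering F q u v)"
proof -
  define G where "G x = (F^^q) x - of_int p" for x
  have Gpow: "(G^^k) x = (F^^(q*k)) x - of_int (p * int k)" for k x
  proof (induction k arbitrary: x)
    case 0 then show ?case by simp
  next
    case (Suc k)
    have "(G^^Suc k) x = G ((F^^(q*k)) x - of_int (p * int k))" using Suc by simp
    also have "\<dots> = (F^^q) ((F^^(q*k)) x) - of_int (p * int k) - of_int p"
      unfolding G_def using Fk_int[of q "(F^^(q*k)) x" "- (p * int k)"] by simp
    also have "(F^^q) ((F^^(q*k)) x) = (F^^(q * Suc k)) x"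
      by (simp only: mult_Suc_right funpow_add o_apply)
    finally show ?case by (simp add: algebra_simps)
  qed
  have Gbd: "\<bar>(G^^k) x - x\<bar> < 2" for k x
  proof -
    have e: "real (q*k) * \<rho> = of_int (p * int k)"
    proof -
      have "real (q*k) * \<rho> = (real q * \<rho>) * real k" by simp
      then show ?thesis using qp by simp
    qed
    have "(G^^k) x - x = (F^^(q*k)) x - x - real (q*k) * \<rho>" by (simp only: Gpow e)
    then show ?thesis using rho[of "q*k" x] by simp
  qed
  have Gsm: "strict_mono G" unfolding G_def using Fk_sm[of q] by (simp add: strict_mono_def)
  have Gct: "continuous_on UNIV G" unfolding G_def by (intro continuous_intros Fk_cont)
  have Gtr: "G (x + of_int m) = G x + of_int m" for x m unfolding G_def by (simp add: Fk_int)
  show ?thesis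
  proof (cases "\<forall>x. G x = x")
    case True
    then have Fq: "(F^^q) x = x + of_int p" for x unfolding G_def by (metis diff_eq_eq)
    define H where "H x = (\<Sum>i<q. (F^^i) x - real i * \<rho>) / real q" for x
    have "continuous_on UNIV H" unfolding H_def by (intro continuous_intros Fk_cont) (use q in auto)
    moreover have "strict_mono H"
    proof (rule strict_monoI)
      fix x y :: real assume "x < y"
      then have "(\<Sum>i<q. (F^^i) x - real i * \<rho>) < (\<Sum>i<q. (F^^i) y - real i * \<rho>)"
        using q by (intro sum_strict_mono) (auto intro: Fk_less simp: lessThan_empty_iff)
      then show "H x < H y" unfolding H_def using q by (simp add: divide_strict_right_mono)
    qed
    moreover have "H (x + 1) = H x + 1" for x
    proof -
      have "(\<Sum>i<q. (F^^i) (x+1) - real i * \<rho>) = (\<Sum>i<q. ((F^^i) x - real i * \<rho>) + 1)"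
        by (intro sum.cong refl) (simp add: Fk_1)
      also have "\<dots> = (\<Sum>i<q. (F^^i) x - real i * \<rho>) + real q" by (simp add: sum.distrib)
      finally show ?thesis unfolding H_def using q by (simp add: field_simps)
    qed
    moreover have "H (F x) = H x + \<rho>" for x
    proof -
      define a where "a i = (F^^i) x - real i * \<rho>" for i
      have "(\<Sum>i<q. (F^^i) (F x) - real i * \<rho>) = (\<Sum>i<q. a (Suc i) + \<rho>)"
        unfolding a_def by (intro sum.cong) (auto simp: funpow_swap1 algebra_simps)
      also have "\<dots> = (\<Sum>i<q. a (Suc i)) + real q * \<rho>" by (simp add: sum.distrib)
      also have "(\<Sum>i<q. a (Suc i)) = (\<Sum>i<q. a i) + a q - a 0"
        using sum.lessThan_Suc_shift[of a q] by simp
      also have "a q = a 0" unfolding a_def using Fq qp by simp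
      finally have "(\<Sum>i<q. (F^^i) (F x) - real i * \<rho>) = (\<Sum>i<q. a i) + real q * \<rho>" by simp
      then show ?thesis unfolding H_def a_def using q by (simp add: field_simps)
    qed
    ultimately show ?thesis unfolding good_conj_def by blast
  next
    case False
    then obtain z where z: "G z \<noteq> z" by blast
    have Gb1: "(G^^j) z \<le> z + 2" "(G^^j) z \<ge> z - 2" for j using Gbd[of j z] by (simp_all add: abs_less_iff)
    have key: "(F^^(q*k)) s \<noteq> t + of_int m" if "(G^^k) s \<noteq> t + of_int (m - p * int k)" for k s t m
      using that Gpow[of k s] by (auto simp: algebra_simps)
    show ?thesis
    proof (cases "G z > z")
      case True
      have "wandering F q z (G z)" unfolding wandering_def
      proof (intro conjI allI impI ballI q True)
        fix k :: nat and s t :: real and m :: int assume "1 \<le> k" "s \<in> {z<..<G z}" "t \<in> {z<..<G z}"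
        then show "(F^^(q*k)) s \<noteq> t + of_int m"
          by (intro key wander_up[OF Gsm Gct Gtr _ True, of "z+2"]) (use Gb1 in auto)
      qed
      then show ?thesis by blast
    next
      case False
      then have zz: "G z < z" using z by simp
      have "wandering F q (G z) z" unfolding wandering_def
      proof (intro conjI allI impI ballI q zz)
        fix k :: nat and s t :: real and m :: int assume "1 \<le> k" "s \<in> {G z<..<z}" "t \<in> {G z<..<z}"
        then show "(F^^(q*k)) s \<noteq> t + of_int m"
          by (intro key wander_down[OF Gsm Gct Gtr _ zz, of "z-2"]) (use Gb1 in auto)
      qed
      then show ?thesis by blast
    qed
  qed
qed

end



context lift
begin

lemma F_surj: "surj F"
proof -
  have "\<exists>x. F x = y" for y
  proof -
    define m where "m = \<lfloor>y - F 0\<rfloor>"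
    have a: "F (of_int m) \<le> y" using F_int[of 0 m] unfolding m_def by simp linarith
    have b: "y \<le> F (of_int m + 1)" using F_int[of 1 m] perF[of 0] unfolding m_def by (simp add: add.commute) linarith
    show ?thesis using IVT'[OF a b _ continuous_on_subset[OF contF]] by auto
  qed
  then show ?thesis by (metis surjI)
qed

definition Finv where "Finv = inv F"

lemma F_Finv: "F (Finv y) = y" unfolding Finv_def using F_surj by (simp add: surj_f_inv_f)
lemma Finv_F: "Finv (F x) = x" unfolding Finv_def using smF by (simp add: strict_mono_imp_inj_on inv_f_f)

lemma Finv_le: "x \<le> y \<Longrightarrow> Finv x \<le> Finv y"
  by (metis F_Finv linorder_not_le smF strict_monoD)

lemma Finv_int: "Finv (x + of_int m) = Finv x + of_int m"
  by (metis F_Finv F_int Finv_F)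

lemma Finvk_int: "(Finv^^k) (x + of_int m) = (Finv^^k) x + of_int m"
  by (induction k arbitrary: x) (simp_all add: Finv_int)

lemma Finvk_le: "x \<le> y \<Longrightarrow> (Finv^^k) x \<le> (Finv^^k) y"
  by (induction k) (simp_all add: Finv_le)

lemma Fk_Finvk: "(F^^k) ((Finv^^k) x) = x"
proof (induction k arbitrary: x)
  case (Suc k)
  have e1: "(Finv^^Suc k) x = Finv ((Finv^^k) x)" by simp
  have e2: "(F^^Suc k) y = (F^^k) (F y)" for y by (simp only: funpow_Suc_right o_apply)
  have "(F^^Suc k) ((Finv^^Suc k) x) = (F^^k) (F (Finv ((Finv^^k) x)))"
    by (simp only: e1 e2)
  then show ?case using Suc by (simp add: F_Finv)
qed simp

definition Fz :: "int \<Rightarrow> real \<Rightarrow> real" where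
  "Fz k = (if 0 \<le> k then F^^nat k else Finv^^nat (-k))"

lemma Fz_succ: "Fz (k+1) x = Fz k (F x)"
proof (cases "0 \<le> k")
  case True
  then have "nat (k+1) = Suc (nat k)" by simp
  then show ?thesis using True unfolding Fz_def by (simp only: funpow_Suc_right o_apply if_True) simp
next
  case False
  define n where "n = nat (-k-1)"
  have n: "nat (-k) = Suc n" unfolding n_def using False by simp
  have "Fz k (F x) = (Finv^^n) x" unfolding Fz_def using False n
    by (simp only: funpow_Suc_right o_apply if_False Finv_F)
  moreover have "Fz (k+1) x = (Finv^^n) x"
  proof (cases "k = -1")
    case True then show ?thesis unfolding Fz_def n_def by simp
  next
    case False
    then have "\<not> 0 \<le> k+1" "nat (-(k+1)) = n" using \<open>\<not> 0 \<le> k\<close> unfolding n_def by auto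
    then show ?thesis unfolding Fz_def by simp
  qed
  ultimately show ?thesis by simp
qed

lemma Fz_int: "Fz k (x + of_int m) = Fz k x + of_int m"
  unfolding Fz_def by (simp add: Fk_int Finvk_int)

lemma Fz_le: "x \<le> y \<Longrightarrow> Fz k x \<le> Fz k y"
  unfolding Fz_def by (simp add: Fk_le Finvk_le)

lemma Fz_bound:
  assumes rho: "\<And>n x. \<bar>(F^^n) x - x - real n * \<rho>\<bar> < 2"
  shows "\<bar>Fz k x - x - of_int k * \<rho>\<bar> < 2"
proof (cases "0 \<le> k")
  case True
  then show ?thesis using rho[of "nat k" x] unfolding Fz_def by simp
next
  case False
  define n where "n = nat (-k)"
  have k: "of_int k = - real n" unfolding n_def using False by simp
  have "\<bar>(F^^n) ((Finv^^n) x) - (Finv^^n) x - real n * \<rho>\<bar> < 2" by (rule rho)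
  then have "\<bar>x - (Finv^^n) x - real n * \<rho>\<bar> < 2" by (simp add: Fk_Finvk)
  then show ?thesis using False unfolding Fz_def n_def[symmetric] k by (simp add: abs_minus_commute)
qed

end



lemma mono_dense_cont:
  fixes H :: "real \<Rightarrow> real"
  assumes mono: "\<And>x y. x \<le> y \<Longrightarrow> H x \<le> H y"
    and dense: "\<And>t e. e > 0 \<Longrightarrow> \<exists>x. \<bar>H x - t\<bar> < e"
  shows "continuous_on UNIV H"
  unfolding continuous_on_iff
proof (intro ballI allI impI)
  fix x e :: real assume e: "e > 0"
  obtain a where a: "\<bar>H a - (H x - e/2)\<bar> < e/2" using dense[of "e/2"] e by auto
  obtain b where b: "\<bar>H b - (H x + e/2)\<bar> < e/2" using dense[of "e/2"] e by auto
  have "a < x"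
  proof (rule ccontr)
    assume "\<not> a < x" then have "H x \<le> H a" using mono by simp
    then show False using a unfolding abs_less_iff by linarith
  qed
  moreover have "x < b"
  proof (rule ccontr)
    assume "\<not> x < b" then have "H b \<le> H x" using mono by simp
    then show False using b unfolding abs_less_iff by linarith
  qed
  ultimately show "\<exists>d>0. \<forall>x'\<in>UNIV. dist x' x < d \<longrightarrow> dist (H x') (H x) < e"
  proof (intro exI[of _ "min (x - a) (b - x)"] conjI ballI impI)
    fix x' assume "dist x' x < min (x - a) (b - x)"
    then have "a \<le> x'" "x' \<le> b" by (auto simp: dist_real_def)
    then have "H a \<le> H x'" "H x' \<le> H b" using mono by auto
    then show "dist (H x') (H x) < e" using a b unfolding dist_real_def abs_less_iff by linarith
  qed simp
qed

context lift
begin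

lemma irrational_case:
  assumes rho: "\<And>n x. \<bar>(F^^n) x - x - real n * \<rho>\<bar> < 2" and irr: "\<rho> \<notin> \<rat>"
  shows "good_conj F \<or> (\<exists>q u v. wandering F q u v)"
proof -
  define g where "g x k = Fz k x - of_int k * \<rho>" for x k
  define H where "H x = (SUP k. g x k)" for x
  have gb: "g x k \<le> x + 2" for x k using Fz_bound[OF rho, of k x] unfolding g_def by simp
  have bdd: "bdd_above (range (g x))" for x using gb by (auto intro!: bdd_aboveI)
  have Hup: "g x k \<le> H x" for x k unfolding H_def by (rule cSUP_upper[OF UNIV_I bdd])
  have Hleast: "H x \<le> B" if "\<And>k. g x k \<le> B" for x B unfolding H_def by (rule cSUP_least) (use that in auto)
  have H_F: "H (F x) = H x + \<rho>" for x
  proof (rule antisym)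
    have "g (F x) k = g x (k+1) + \<rho>" for k unfolding g_def using Fz_succ[of k x] by (simp add: algebra_simps)
    then show "H (F x) \<le> H x + \<rho>" using Hup by (intro Hleast) (metis add_le_cancel_right)
    have "g x k \<le> H (F x) - \<rho>" for k
    proof -
      have "g (F x) (k-1) = g x k + \<rho>" unfolding g_def using Fz_succ[of "k-1" x] by (simp add: algebra_simps)
      then show ?thesis using Hup[of "F x" "k-1"] by simp
    qed
    then have "H x \<le> H (F x) - \<rho>" by (rule Hleast)
    then show "H x + \<rho> \<le> H (F x)" by simp
  qed
  have H_int: "H (x + of_int m) = H x + of_int m" for x m
  proof (rule antisym)
    have gi: "g (x + of_int m) k = g x k + of_int m" for k unfolding g_def by (simp add: Fz_int)
    then show "H (x + of_int m) \<le> H x + of_int m" using Hup by (intro Hleast) simp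
    have "g x k \<le> H (x + of_int m) - of_int m" for k using Hup[of "x + of_int m" k] gi by simp
    then have "H x \<le> H (x + of_int m) - of_int m" by (rule Hleast)
    then show "H x + of_int m \<le> H (x + of_int m)" by simp
  qed
  have H_mono: "H x \<le> H y" if "x \<le> y" for x y
  proof (rule Hleast)
    fix k have "g x k \<le> g y k" unfolding g_def using Fz_le[OF that] by simp
    then show "g x k \<le> H y" using Hup[of y k] by simp
  qed
  have H_Finv: "H (Finv x) = H x - \<rho>" for x using H_F[of "Finv x"] F_Finv by simp
  have rng1: "y + \<rho> \<in> range H" "y - \<rho> \<in> range H" "y + of_int m \<in> range H" if yr: "y \<in> range H" for y m
  proof -
    obtain z where z: "y = H z" using yr by auto
    show "y + \<rho> \<in> range H" using z H_F[of z] by (metis rangeI)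
    show "y - \<rho> \<in> range H" using z H_Finv[of z] by (metis rangeI)
    show "y + of_int m \<in> range H" using z H_int[of z m] by (metis rangeI)
  qed
  have rngk: "y + of_int k * \<rho> \<in> range H" if "y \<in> range H" for y k
  proof (induction k rule: int_induct[where k=0])
    case base then show ?case using that by simp
  next
    case (step1 i) then show ?case using rng1(1)[of "y + of_int i * \<rho>"] by (simp add: algebra_simps)
  next
    case (step2 i) then show ?case using rng1(2)[of "y + of_int i * \<rho>"] by (simp add: algebra_simps)
  qed
  have dense: "\<exists>x. \<bar>H x - t\<bar> < e" if ep: "e > 0" for t e
  proof -
    obtain h k :: int where hk: "\<bar>of_int k * \<rho> - of_int h - (t - H 0)\<bar> < e"
      using sequence_of_fractional_parts_is_dense[OF irr ep] by metis
    have "H 0 + of_int k * \<rho> + of_int (-h) \<in> range H" using rng1(3) rngk by blast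
    then obtain x where "H x = H 0 + of_int k * \<rho> + of_int (-h)" by auto
    then show ?thesis using hk by (intro exI[of _ x]) (simp add: abs_minus_commute algebra_simps)
  qed
  have Hc: "continuous_on UNIV H" by (rule mono_dense_cont[OF H_mono dense])
  show ?thesis
  proof (cases "strict_mono H")
    case True
    have "H (x + 1) = H x + 1" for x using H_int[of x 1] by simp
    then show ?thesis unfolding good_conj_def using Hc True H_F by blast
  next
    case False
    then obtain x y where xy: "x < y" "\<not> H x < H y" unfolding strict_mono_def by auto
    then have Hxy: "H x = H y" using H_mono[of x y] by simp
    have Hin: "H s = H x" if "s \<in> {x<..<y}" for s using that H_mono[of x s] H_mono[of s y] Hxy by auto
    have HFk: "H ((F^^k) s) = H s + real k * \<rho>" for k s by (induction k) (simp_all add: H_F algebra_simps)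
    have "wandering F 1 x y" unfolding wandering_def
    proof (intro conjI allI impI ballI xy(1))
      fix k :: nat and s t :: real and m :: int assume k: "1 \<le> k" and s: "s \<in> {x<..<y}" and t: "t \<in> {x<..<y}"
      show "(F^^(1*k)) s \<noteq> t + of_int m"
      proof
        assume "(F^^(1*k)) s = t + of_int m"
        then have "H s + real k * \<rho> = H t + of_int m" using HFk[of k s] H_int[of t m] by simp
        then have "real k * \<rho> = of_int m" using Hin[OF s] Hin[OF t] by simp
        then have "\<rho> = of_int m / real k" using k by (simp add: field_simps)
        then have "\<rho> \<in> \<rat>" by simp
        then show False using irr by simp
      qed
    qed simp
    then show ?thesis by blast
  qed
qed

lemma dichotomy: "good_conj F \<or> (\<exists>q u v. wandering F q u v)"
proof -
  obtain \<rho> where rho: "\<And>n x. \<bar>(F^^n) x - x - real n * \<rho>\<bar> < 2" using rho_exists by blast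
  show ?thesis
  proof (cases "\<rho> \<in> \<rat>")
    case True
    then obtain a b where ab: "b > 0" "\<rho> = of_int a / of_int b" by (metis Rats_cases')
    have "real (nat b) * \<rho> = of_int a" using ab by simp
    moreover have "nat b \<ge> 1" using ab by simp
    ultimately show ?thesis using rational_case[OF rho] by blast
  next
    case False then show ?thesis by (rule irrational_case[OF rho])
  qed
qed

end



lemma cp_Rep_frac: "circ_proj (Rep_circle (circ_proj x)) = circ_proj x"
  by (simp add: cp_Rep)

lemma opf_lift:
  assumes "orientation_preserving_homeo f"
  obtains F f' where "lift F" "\<And>x. f (circ_proj x) = circ_proj (F x)" "homeomorphism UNIV UNIV f f'"
  using assms unfolding orientation_preserving_homeo_def lift_def by blast

lemma fk_cp: "(\<And>x. f (circ_proj x) = circ_proj (F x)) \<Longrightarrow> (f^^k) (circ_proj x) = circ_proj ((F^^k) x)"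
  by (induction k) auto

lemma good_conj_imp:
  assumes L: "lift F" and fF: "\<And>x. f (circ_proj x) = circ_proj (F x)" and gc: "good_conj F"
  shows "\<exists>g. is_rotation g \<and> top_conjugate f g"
proof -
  obtain H :: "real \<Rightarrow> real" and \<rho> where Hc: "continuous_on UNIV H" and Hs: "strict_mono H" and H1: "\<And>x. H (x+1) = H x + 1"
    and HF: "\<And>x. H (F x) = H x + \<rho>" using gc unfolding good_conj_def by blast
  interpret LH: lift H using Hc Hs H1 by unfold_locales
  define h where "h c = circ_proj (H (Rep_circle c))" for c
  define g where "g c = circ_proj (Rep_circle c + \<rho>)" for c
  have hcp: "h (circ_proj x) = circ_proj (H x)" for x
  proof -
    have "Rep_circle (circ_proj x) = x + of_int (- \<lfloor>x\<rfloor>)" by (simp add: Rep_cp frac_def)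
    then show ?thesis unfolding h_def by (simp only: LH.F_int cp_add_int)
  qed
  have gcp: "g (circ_proj x) = circ_proj (x + \<rho>)" for x
  proof -
    have "Rep_circle (circ_proj x) + \<rho> = (x + \<rho>) + of_int (- \<lfloor>x\<rfloor>)" by (simp add: Rep_cp frac_def)
    then show ?thesis unfolding g_def by (simp only: cp_add_int)
  qed
  have rot: "is_rotation g" unfolding is_rotation_def using gcp by blast
  have comm: "h \<circ> f = g \<circ> h"
  proof
    fix c obtain x where c: "c = circ_proj x" using cp_surj by blast
    show "(h \<circ> f) c = (g \<circ> h) c" unfolding c by (simp add: fF hcp gcp HF)
  qed
  have cont: "continuous_on UNIV h"
    unfolding continuous_on_iff
  proof (intro ballI allI impI)
    fix c :: circle and e :: real assume e: "e > 0"
    define x0 where "x0 = Rep_circle c"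
    have c: "c = circ_proj x0" unfolding x0_def by (simp add: cp_Rep)
    have "isCont H x0" using Hc by (simp add: continuous_on_eq_continuous_at)
    then obtain d where d: "d > 0" "\<And>y. \<bar>y - x0\<bar> < d \<Longrightarrow> \<bar>H y - H x0\<bar> < e"
      using e unfolding continuous_at_eps_delta dist_real_def by blast
    show "\<exists>d>0. \<forall>c'\<in>UNIV. dist c' c < d \<longrightarrow> dist (h c') (h c) < e"
    proof (intro exI[of _ d] conjI ballI impI d(1))
      fix c' assume dc: "dist c' c < d"
      obtain y0 where y0: "c' = circ_proj y0" using cp_surj by blast
      obtain m where m: "dist (circ_proj y0) (circ_proj x0) = \<bar>y0 - x0 - of_int m\<bar>" using dist_cp_eq by blast
      define y where "y = y0 + of_int (-m)"
      have cy: "c' = circ_proj y" unfolding y_def y0 by (simp only: cp_add_int)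
      have "\<bar>y - x0\<bar> < d" using dc m unfolding y_def y0 c by simp
      then have "\<bar>H y - H x0\<bar> < e" by (rule d(2))
      moreover have "dist (h c') (h c) \<le> \<bar>H y - H x0\<bar>" unfolding cy c hcp by (rule dist_cp_le0)
      ultimately show "dist (h c') (h c) < e" by linarith
    qed
  qed
  have inj: "inj_on h UNIV"
  proof (rule inj_onI)
    fix a b assume ab: "h a = h b"
    obtain x y where a: "a = circ_proj x" and b: "b = circ_proj y" using cp_surj by metis
    then have "circ_proj (H x) = circ_proj (H y)" using ab hcp by simp
    then obtain m where "H x = H y + of_int m" using cp_eq_iff by blast
    then have "H x = H (y + of_int m)" by (simp add: LH.F_int)
    then have "x = y + of_int m" using Hs by (simp add: strict_mono_eq)
    then show "a = b" unfolding a b by (simp add: cp_add_int)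
  qed
  have surj: "h ` UNIV = UNIV"
  proof -
    have "c \<in> range h" for c
    proof -
      obtain t where t: "c = circ_proj t" using cp_surj by blast
      obtain x where "H x = t" using LH.F_surj by (metis surjD)
      then show ?thesis using t hcp by (metis rangeI)
    qed
    then show ?thesis by auto
  qed
  obtain h' where "homeomorphism UNIV UNIV h h'"
    using homeomorphism_compact[OF compact_circle cont surj inj] by blast
  then have "top_conjugate f g" unfolding top_conjugate_def using comm by blast
  then show ?thesis using rot by blast
qed




lemma dyn_dist_lt:
  assumes "n \<ge> 1"
  shows "dyn_dist f n x y < e \<longleftrightarrow> (\<forall>k<n. dist ((f^^k) x) ((f^^k) y) < e)"
  unfolding dyn_dist_def using assms by (subst Max_less_iff) (auto simp: lessThan_empty_iff)

lemma dyn_dist_ge: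
  assumes "k < n"
  shows "dist ((f^^k) x) ((f^^k) y) \<le> dyn_dist f n x y"
  unfolding dyn_dist_def using assms by (intro Max_ge) auto

lemma dyn_triangle:
  assumes "n \<ge> 1"
  shows "dyn_dist f n x y \<le> dyn_dist f n z x + dyn_dist f n z y"
proof -
  have "dist ((f^^k) x) ((f^^k) y) \<le> dyn_dist f n z x + dyn_dist f n z y" if "k < n" for k
    using dist_triangle3[of "(f^^k) x" "(f^^k) y" "(f^^k) z"] dyn_dist_ge[OF that, of f z x] dyn_dist_ge[OF that, of f z y]
    by (simp add: dist_commute)
  then show ?thesis unfolding dyn_dist_def using assms by (intro Max.boundedI) (auto simp: lessThan_empty_iff)
qed

lemma cover_num_le:
  assumes "finite C" "Y \<subseteq> (\<Union>c\<in>C. {y. dyn_dist f n c y < e})"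
  shows "cover_num f Y n e \<le> card C"
  unfolding cover_num_def by (rule Least_le) (use assms in blast)

lemma cover_num_ge:
  fixes f :: "'a::metric_space \<Rightarrow> 'a"
  assumes n: "n \<ge> 1" and ex: "finite C0" "UNIV \<subseteq> (\<Union>c\<in>C0. {y. dyn_dist f n c y < e})"
    and sep: "\<And>i j. i < M \<Longrightarrow> j < M \<Longrightarrow> i \<noteq> j \<Longrightarrow> dyn_dist f n (p i) (p j) \<ge> 2 * e"
  shows "M \<le> cover_num f UNIV n e"
proof -
  have "\<exists>C. finite C \<and> card C = cover_num f UNIV n e \<and> UNIV \<subseteq> (\<Union>c\<in>C. {y. dyn_dist f n c y < e})"
    unfolding cover_num_def by (rule LeastI_ex) (use ex in blast)
  then obtain C where C: "finite C" "card C = cover_num f UNIV n e" "UNIV \<subseteq> (\<Union>c\<in>C. {y. dyn_dist f n c y < e})"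
    by blast
  define sel where "sel i = (SOME c. c \<in> C \<and> dyn_dist f n c (p i) < e)" for i
  have sel: "sel i \<in> C \<and> dyn_dist f n (sel i) (p i) < e" for i
    unfolding sel_def by (rule someI_ex) (use C(3) in blast)
  have "inj_on sel {..<M}"
  proof (rule inj_onI)
    fix i j assume ij: "i \<in> {..<M}" "j \<in> {..<M}" "sel i = sel j"
    show "i = j"
    proof (rule ccontr)
      assume "i \<noteq> j"
      then have "2 * e \<le> dyn_dist f n (p i) (p j)" using sep ij by auto
      also have "\<dots> \<le> dyn_dist f n (sel i) (p i) + dyn_dist f n (sel i) (p j)" by (rule dyn_triangle[OF n])
      also have "\<dots> < 2 * e" using sel[of i] sel[of j] ij(3) by simp
      finally show False by simp
    qed
  qed
  moreover have "sel ` {..<M} \<subseteq> C" using sel by auto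
  ultimately have "card {..<M} \<le> card C" using C(1) by (metis card_inj_on_le)
  then show ?thesis using C(2) by simp
qed

lemma conj_bounded:
  fixes f g :: "circle \<Rightarrow> circle"
  assumes conj: "top_conjugate f g" and rot: "is_rotation g" and e: "e > 0"
  shows "\<exists>K. \<forall>n\<ge>1. cover_num f UNIV n e \<le> K"
proof -
  obtain h h' where hom: "homeomorphism UNIV UNIV h h'" and comm: "h \<circ> f = g \<circ> h"
    using conj unfolding top_conjugate_def by blast
  obtain a where ga: "\<And>x. g (circ_proj x) = circ_proj (x + a)" using rot unfolding is_rotation_def by blast
  have giso: "dist (g u) (g v) = dist u v" for u v
  proof -
    obtain x y where "u = circ_proj x" "v = circ_proj y" using cp_surj by metis
    then show ?thesis using ga dist_cp_shift by simp
  qed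
  have gkiso: "dist ((g^^k) u) ((g^^k) v) = dist u v" for k u v
    by (induction k) (simp_all add: giso)
  have hh': "h' (h z) = z" for z using hom unfolding homeomorphism_def by auto
  have h'h: "h (h' z) = z" for z using hom unfolding homeomorphism_def by auto
  have hf: "h (f z) = g (h z)" for z using comm by (metis comp_apply)
  have hfk: "h ((f^^k) z) = (g^^k) (h z)" for k z by (induction k) (simp_all add: hf)
  have fk: "(f^^k) z = h' ((g^^k) (h z))" for k z using hfk[of k z] hh'[of "(f^^k) z"] by simp
  have "continuous_on UNIV h'" using hom unfolding homeomorphism_def by auto
  then have "uniformly_continuous_on UNIV h'" using compact_circle by (rule compact_uniformly_continuous)
  then obtain d where d0: "d > 0" and d1: "\<forall>x\<in>UNIV. \<forall>x'\<in>UNIV. dist x' x < d \<longrightarrow> dist (h' x') (h' x) < e"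
    using e unfolding uniformly_continuous_on_def by blast
  have d: "d > 0" "\<And>u v. dist u v < d \<Longrightarrow> dist (h' u) (h' v) < e" using d0 d1 by blast+
  obtain D :: "circle set" where D0: "D \<subseteq> UNIV" and D: "finite D" "UNIV \<subseteq> (\<Union>c\<in>D. ball c d)"
    by (rule compactE_image[OF compact_circle, of UNIV "\<lambda>c. ball c d"]) (use d(1) in auto)
  have "cover_num f UNIV n e \<le> card (h' ` D)" if n: "n \<ge> 1" for n
  proof (rule cover_num_le)
    show "finite (h' ` D)" using D by simp
    show "UNIV \<subseteq> (\<Union>c\<in>h' ` D. {y. dyn_dist f n c y < e})"
    proof
      fix y :: circle
      have "h y \<in> (\<Union>c\<in>D. ball c d)" using D(2) by (rule subsetD) simp
      then obtain c where c: "c \<in> D" "dist c (h y) < d" by (auto simp: mem_ball)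
      have "dyn_dist f n (h' c) y < e" unfolding dyn_dist_lt[OF n]
      proof (intro allI impI)
        fix k assume "k < n"
        have "dist ((g^^k) c) ((g^^k) (h y)) < d" using gkiso c(2) by simp
        then have "dist (h' ((g^^k) c)) (h' ((g^^k) (h y))) < e" by (rule d(2))
        then show "dist ((f^^k) (h' c)) ((f^^k) y) < e" unfolding fk[of k] h'h .
      qed
      then show "y \<in> (\<Union>c\<in>h' ` D. {y. dyn_dist f n c y < e})" using c(1) by (intro UN_I[of "h' c"]) auto
    qed
  qed
  then show ?thesis by blast
qed




lemma dyn_dist_commute: "dyn_dist f n x y = dyn_dist f n y x"
  unfolding dyn_dist_def by (simp add: dist_commute)

context lift
begin

lemma P_finite_card:
  assumes N: "N \<ge> 1"
  shows "finite {x \<in> {0..<1}. \<exists>j::int. (F^^k) x = of_int j / real N} \<and> card {x \<in> {0..<1}. \<exists>j::int. (F^^k) x = of_int j / real N} \<le> N"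
proof -
  define P where "P = {x \<in> {0..<1}. \<exists>j::int. (F^^k) x = of_int j / real N}"
  define a where "a = (F^^k) 0"
  define c where "c = \<lceil>real N * a\<rceil>"
  define \<phi> where "\<phi> x = \<lfloor>real N * (F^^k) x\<rfloor>" for x
  have inj: "inj_on \<phi> P"
  proof (rule inj_onI)
    fix x y assume x: "x \<in> P" and y: "y \<in> P" and e: "\<phi> x = \<phi> y"
    obtain i where i: "(F^^k) x = of_int i / real N" using x unfolding P_def by blast
    obtain j where j: "(F^^k) y = of_int j / real N" using y unfolding P_def by blast
    have "\<phi> x = i" "\<phi> y = j" unfolding \<phi>_def i j using N by simp_all
    then have "(F^^k) x = (F^^k) y" using e i j by simp
    then show "x = y" using Fk_sm strict_mono_eq by metis
  qed
  have img: "\<phi> ` P \<subseteq> {c..<c + int N}"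
  proof
    fix z assume "z \<in> \<phi> ` P"
    then obtain x where x: "x \<in> P" and z: "z = \<phi> x" by blast
    obtain j where j: "(F^^k) x = of_int j / real N" using x unfolding P_def by blast
    have zj: "z = j" unfolding z \<phi>_def j using N by simp
    have x01: "0 \<le> x" "x < 1" using x unfolding P_def by auto
    have "a \<le> (F^^k) x" unfolding a_def using Fk_le x01 by blast
    moreover have "(F^^k) x < a + 1" unfolding a_def using Fk_less[OF x01(2), of k] Fk_1[of k 0] by simp
    ultimately have "real N * a \<le> of_int j" "of_int j < real N * a + real N"
      using j N by (simp_all add: field_simps)
    then have "c \<le> j" "j < c + int N" unfolding c_def by (simp_all add: ceiling_le_iff) linarith
    then show "z \<in> {c..<c + int N}" using zj by simp
  qed
  have "finite (\<phi> ` P)" by (rule finite_subset[OF img]) simp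
  then have fin: "finite P" using inj by (rule finite_imageD)
  have "card P \<le> card {c..<c + int N}" using card_inj_on_le[OF inj img] by simp
  then show ?thesis using fin unfolding P_def by simp
qed

lemma upper_cover:
  fixes f :: "circle \<Rightarrow> circle"
  assumes fF: "\<And>x. f (circ_proj x) = circ_proj (F x)" and N: "N \<ge> 1" and n: "n \<ge> 1" and Ne: "1 / real N < e"
  shows "\<exists>C. finite C \<and> card C \<le> N * n + 1 \<and> UNIV \<subseteq> (\<Union>c\<in>C. {y. dyn_dist f n c y < e})"
proof -
  define P where "P k = {x \<in> {0..<1}. \<exists>j::int. (F^^k) x = of_int j / real N}" for k
  have Pfc: "finite (P k) \<and> card (P k) \<le> N" for k unfolding P_def by (rule P_finite_card[OF N])
  define S where "S = insert 0 (\<Union>k<n. P k)"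
  have Sfin: "finite S" unfolding S_def using Pfc by simp
  have "card (\<Union>k<n. P k) \<le> (\<Sum>k<n. card (P k))" by (rule card_UN_le) simp
  also have "\<dots> \<le> (\<Sum>k<n. N)" using Pfc by (intro sum_mono) auto
  finally have "card (\<Union>k<n. P k) \<le> N * n" by (simp add: mult.commute)
  moreover have "finite (\<Union>k<n. P k)" using Pfc by simp
  then have "card S \<le> Suc (card (\<Union>k<n. P k))" unfolding S_def by (simp add: card_insert_if)
  ultimately have Scard: "card S \<le> N * n + 1" by linarith
  have S01: "t \<in> S \<Longrightarrow> 0 \<le> t \<and> t < 1" for t unfolding S_def P_def by auto
  define C where "C = circ_proj ` S"
  have "finite C" "card C \<le> N * n + 1" unfolding C_def using Sfin Scard card_image_le[OF Sfin, of circ_proj] by auto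
  moreover have "UNIV \<subseteq> (\<Union>c\<in>C. {y. dyn_dist f n c y < e})"
  proof
    fix y :: circle
    define x where "x = Rep_circle y"
    have x01: "0 \<le> x" "x < 1" using Rep_circle[of y] unfolding x_def by auto
    have yx: "y = circ_proj x" unfolding x_def by (simp add: cp_Rep)
    define T where "T = {t \<in> S. t \<le> x}"
    have Tfin: "finite T" "T \<noteq> {}" unfolding T_def using Sfin x01 by (auto simp: S_def)
    define s where "s = Max T"
    have sT: "s \<in> T" unfolding s_def using Tfin by (rule Max_in)
    then have sS: "s \<in> S" and sx: "s \<le> x" unfolding T_def by auto
    have smax: "t \<le> s" if "t \<in> S" "t \<le> x" for t unfolding s_def using Tfin that by (intro Max_ge) (auto simp: T_def)
    have close: "(F^^k) x - (F^^k) s < 1 / real N" if k: "k < n" for k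
    proof (rule ccontr)
      assume "\<not> ?thesis"
      then have ge: "(F^^k) x - (F^^k) s \<ge> 1 / real N" by simp
      define j where "j = \<lfloor>real N * (F^^k) x\<rfloor>"
      have j1: "of_int j / real N \<le> (F^^k) x" unfolding j_def using N by (simp add: field_simps)
      have "of_int j > real N * (F^^k) x - 1" unfolding j_def by linarith
      moreover have Npos: "real N > 0" using N by simp
      moreover have "((F^^k) x - 1/real N) * real N = real N * (F^^k) x - 1" using Npos by (simp add: field_simps)
      ultimately have j2: "of_int j / real N > (F^^k) x - 1 / real N" by (simp add: pos_less_divide_eq)
      have j3: "(F^^k) s < of_int j / real N" using j2 ge by linarith
      obtain t where t: "s \<le> t" "t \<le> x" "(F^^k) t = of_int j / real N"
        using IVT'[of "F^^k" s "of_int j / real N" x, OF less_imp_le[OF j3] j1 sx Fk_cont] by blast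
      have "t \<noteq> s" using t(3) j3 by auto
      moreover have "t \<in> S"
      proof -
        have "0 \<le> t" "t < 1" using t S01[OF sS] x01 by auto
        then have "t \<in> P k" unfolding P_def using t(3) by auto
        then show ?thesis unfolding S_def using k by auto
      qed
      ultimately show False using smax[of t] t by auto
    qed
    have "dyn_dist f n (circ_proj s) y < e" unfolding dyn_dist_lt[OF n] yx
    proof (intro allI impI)
      fix k assume k: "k < n"
      have "dist ((f^^k) (circ_proj s)) ((f^^k) (circ_proj x)) = dist (circ_proj ((F^^k) s)) (circ_proj ((F^^k) x))"
        by (simp add: fk_cp[of f F, OF fF])
      also have "\<dots> \<le> \<bar>(F^^k) s - (F^^k) x\<bar>" by (rule dist_cp_le0)
      also have "\<dots> < 1 / real N" using close[OF k] Fk_le[OF sx, of k] by simp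
      finally show "dist ((f^^k) (circ_proj s)) ((f^^k) (circ_proj x)) < e" using Ne by simp
    qed
    then show "y \<in> (\<Union>c\<in>C. {y. dyn_dist f n c y < e})" unfolding C_def using sS by (intro UN_I[of "circ_proj s"] imageI) auto
  qed
  ultimately show ?thesis by blast
qed

end



lemma exists_N: "e > 0 \<Longrightarrow> \<exists>N::nat. N \<ge> 1 \<and> 1 / real N < e"
proof -
  assume "e > 0"
  then obtain n0 :: nat where "inverse (real (Suc n0)) < e" using reals_Archimedean by blast
  then show ?thesis by (intro exI[of _ "Suc n0"]) (simp add: divide_inverse)
qed

context lift
begin

lemma lower_cover:
  fixes f f' :: "circle \<Rightarrow> circle"
  assumes fF: "\<And>x. f (circ_proj x) = circ_proj (F x)" and hom: "homeomorphism UNIV UNIV f f'"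
    and w: "wandering F q u v" and e: "e > 0" "4 * e \<le> v - u" and n: "n \<ge> 1"
  shows "real n \<le> real q * real (cover_num f UNIV n e)"
proof -
  have q: "q \<ge> 1" and uv: "u < v" and wd: "\<And>k s t m. k \<ge> 1 \<Longrightarrow> s \<in> {u<..<v} \<Longrightarrow> t \<in> {u<..<v} \<Longrightarrow> (F^^(q*k)) s \<noteq> t + of_int m"
    using w unfolding wandering_def by auto
  define c where "c = (u + v) / 2"
  define r where "r = (v - u) / 2"
  have ff': "f (f' z) = z" for z using hom unfolding homeomorphism_def by auto
  have fkf'k: "(f^^k) ((f'^^k) z) = z" for k z
  proof (induction k arbitrary: z)
    case (Suc k)
    have e1: "(f'^^Suc k) z = f' ((f'^^k) z)" by simp
    have e2: "(f^^Suc k) y = (f^^k) (f y)" for y by (simp only: funpow_Suc_right o_apply)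
    have "(f^^Suc k) ((f'^^Suc k) z) = (f^^k) (f (f' ((f'^^k) z)))"
      by (simp only: e1 e2)
    then show ?case using Suc ff' by simp
  qed simp
  define p where "p j = (f'^^(q*j)) (circ_proj c)" for j
  define M where "M = (n - 1) div q + 1"
  have sep_lt: "dyn_dist f n (p i) (p j) \<ge> 2 * e" if ij: "i < j" "j < M" for i j
  proof -
    have tj: "q * j < n"
    proof -
      have "j \<le> (n-1) div q" using ij unfolding M_def by simp
      then have "q * j \<le> q * ((n-1) div q)" by simp
      also have "\<dots> \<le> n - 1" by simp
      finally show ?thesis using n by simp
    qed
    define k where "k = j - i"
    have k: "k \<ge> 1" unfolding k_def using ij by simp
    have e1: "(f^^(q*j)) (p j) = circ_proj c" unfolding p_def by (rule fkf'k)
    have "q * j = q * k + q * i" unfolding k_def using ij by (simp add: algebra_simps)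
    then have "(f^^(q*j)) (p i) = (f^^(q*k)) ((f^^(q*i)) (p i))" by (simp add: funpow_add)
    also have "\<dots> = circ_proj ((F^^(q*k)) c)" unfolding p_def fkf'k by (rule fk_cp[of f F, OF fF])
    finally have e2: "(f^^(q*j)) (p i) = circ_proj ((F^^(q*k)) c)" .
    have "r \<le> dist (circ_proj c) (circ_proj ((F^^(q*k)) c))"
    proof (rule dist_cp_ge)
      fix m :: int
      show "r \<le> \<bar>c - (F^^(q*k)) c - of_int m\<bar>"
      proof (rule ccontr)
        assume "\<not> ?thesis"
        then have "\<bar>c - (F^^(q*k)) c - of_int m\<bar> < r" by simp
        then have lt: "c - r < (F^^(q*k)) c + of_int m" "(F^^(q*k)) c + of_int m < c + r" unfolding abs_less_iff by linarith+
        have "c - r = u" "c + r = v" unfolding c_def r_def by (simp_all add: field_simps)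
        then have tin: "(F^^(q*k)) c + of_int m \<in> {u<..<v}" using lt by simp
        have "c \<in> {u<..<v}" unfolding c_def using uv by simp
        then have "(F^^(q*k)) c \<noteq> ((F^^(q*k)) c + of_int m) + of_int (-m)" using wd[OF k _ tin] by blast
        then show False by simp
      qed
    qed
    also have "\<dots> = dist ((f^^(q*j)) (p i)) ((f^^(q*j)) (p j))" unfolding e1 e2 by (simp add: dist_commute)
    also have "\<dots> \<le> dyn_dist f n (p i) (p j)" by (rule dyn_dist_ge[OF tj])
    finally show ?thesis using e unfolding r_def by simp
  qed
  have sep: "dyn_dist f n (p i) (p j) \<ge> 2 * e" if "i < M" "j < M" "i \<noteq> j" for i j
  proof (cases "i < j")
    case True then show ?thesis using sep_lt that by simp
  next
    case False then show ?thesis using sep_lt[of j i] that by (simp add: dyn_dist_commute)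
  qed
  obtain N :: nat where N: "N \<ge> 1" "1 / real N < e" using exists_N[OF e(1)] by blast
  obtain C0 where C0: "finite C0" "UNIV \<subseteq> (\<Union>c\<in>C0. {y. dyn_dist f n c y < e})"
    using upper_cover[OF fF N(1) n N(2)] by blast
  have "M \<le> cover_num f UNIV n e" by (rule cover_num_ge[OF n C0 sep])
  moreover have "n \<le> q * M"
  proof -
    have "n - 1 < q * ((n - 1) div q) + q" using q by (metis add.commute div_mult_mod_eq mod_less_divisor mult.commute nat_add_left_cancel_less le_add1 less_le_trans not_one_le_zero linorder_not_le)
    then show ?thesis unfolding M_def by simp
  qed
  ultimately have "n \<le> q * cover_num f UNIV n e" by (meson le_trans mult_le_mono2)
  then show ?thesis by (metis of_nat_le_iff of_nat_mult)
qed

end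



lemma ln_ratio_lim: "(\<lambda>n. c / ln (real n)) \<longlonglongrightarrow> (0::real)"
  by real_asymp

lemma limsup_eq_of_tendsto:
  assumes "(a \<longlongrightarrow> (l::real)) sequentially"
  shows "limsup (\<lambda>n. ereal (a n)) = ereal l"
  by (rule lim_imp_Limsup) (simp_all add: tendsto_ereal assms)

lemma phi_zero:
  fixes f :: "'a::metric_space \<Rightarrow> 'a"
  assumes "\<forall>n\<ge>1. cover_num f UNIV n e \<le> K"
  shows "limsup (\<lambda>n. ereal (ln (real (cover_num f UNIV n e)) / ln (real n))) = 0"
proof -
  define K' where "K' = max K 1"
  define a where "a n = ln (real (cover_num f UNIV n e)) / ln (real n)" for n
  have "(a \<longlongrightarrow> 0) sequentially"
  proof (rule tendsto_sandwich[of "\<lambda>_. 0" _ _ "\<lambda>n. ln (real K') / ln (real n)"])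
    have "0 \<le> a n \<and> a n \<le> ln (real K') / ln (real n)" if n: "n \<ge> 2" for n
    proof -
      have lnpos: "ln (real n) > 0" using n by simp
      have "cover_num f UNIV n e \<le> K" using assms n by simp
      then have c: "cover_num f UNIV n e \<le> K'" unfolding K'_def by simp
      have "0 \<le> ln (real (cover_num f UNIV n e)) \<and> ln (real (cover_num f UNIV n e)) \<le> ln (real K')"
      proof (cases "cover_num f UNIV n e = 0")
        case True then show ?thesis unfolding K'_def by simp
      next
        case False then show ?thesis using c by simp
      qed
      then show ?thesis unfolding a_def using lnpos by (simp add: divide_right_mono)
    qed
    then show "eventually (\<lambda>n. 0 \<le> a n) sequentially" "eventually (\<lambda>n. a n \<le> ln (real K') / ln (real n)) sequentially"
      by (auto intro: eventually_sequentiallyI[of 2])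
  qed (simp_all add: ln_ratio_lim)
  then show ?thesis using limsup_eq_of_tendsto unfolding a_def by (metis zero_ereal_def)
qed

lemma phi_le1:
  fixes f :: "'a::metric_space \<Rightarrow> 'a"
  assumes "\<forall>n\<ge>1. cover_num f UNIV n e \<le> N * n + 1"
  shows "limsup (\<lambda>n. ereal (ln (real (cover_num f UNIV n e)) / ln (real n))) \<le> 1"
proof -
  define b where "b n = 1 + ln (real N + 1) / ln (real n)" for n
  have b: "(b \<longlongrightarrow> 1) sequentially" unfolding b_def using ln_ratio_lim[of "ln (real N + 1)"]
    by (auto intro: tendsto_eq_intros)
  have "ln (real (cover_num f UNIV n e)) / ln (real n) \<le> b n" if n: "n \<ge> 2" for n
  proof -
    have lnpos: "ln (real n) > 0" using n by simp
    have "cover_num f UNIV n e \<le> N * n + 1" using assms n by simp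
    moreover have "N * n + 1 \<le> (N + 1) * n" using n by simp
    ultimately have "cover_num f UNIV n e \<le> (N + 1) * n" by linarith
    then have cr: "real (cover_num f UNIV n e) \<le> (real N + 1) * real n"
      by (metis of_nat_le_iff of_nat_mult of_nat_Suc Suc_eq_plus1 add.commute)
    have pos: "(real N + 1) * real n \<ge> 1" using n mult_mono[of 1 "real N + 1" 1 "real n"] by simp
    have "ln (real (cover_num f UNIV n e)) \<le> ln ((real N + 1) * real n)"
    proof (cases "cover_num f UNIV n e = 0")
      case True then show ?thesis using pos by simp
    next
      case False then show ?thesis using cr by simp
    qed
    also have "\<dots> = ln (real N + 1) + ln (real n)" using n by (simp add: ln_mult)
    finally show ?thesis unfolding b_def using lnpos by (simp add: field_simps)
  qed
  then have "limsup (\<lambda>n. ereal (ln (real (cover_num f UNIV n e)) / ln (real n))) \<le> limsup (\<lambda>n. ereal (b n))"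
    by (intro Limsup_mono eventually_sequentiallyI[of 2]) simp
  also have "\<dots> = 1" using limsup_eq_of_tendsto[OF b] by (simp add: one_ereal_def)
  finally show ?thesis .
qed

lemma phi_ge1:
  fixes f :: "'a::metric_space \<Rightarrow> 'a"
  assumes "\<forall>n\<ge>1. real n \<le> real q * real (cover_num f UNIV n e)" and q: "q \<ge> 1"
  shows "limsup (\<lambda>n. ereal (ln (real (cover_num f UNIV n e)) / ln (real n))) \<ge> 1"
proof -
  define b where "b n = 1 - ln (real q) / ln (real n)" for n
  have b: "(b \<longlongrightarrow> 1) sequentially" unfolding b_def using ln_ratio_lim[of "ln (real q)"]
    by (auto intro: tendsto_eq_intros)
  have "b n \<le> ln (real (cover_num f UNIV n e)) / ln (real n)" if n: "n \<ge> 2" for n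
  proof -
    have lnpos: "ln (real n) > 0" using n by simp
    have le: "real n / real q \<le> real (cover_num f UNIV n e)" using assms n q by (simp add: field_simps)
    have "real n / real q > 0" using n q by simp
    then have "ln (real n / real q) \<le> ln (real (cover_num f UNIV n e))" using le by simp
    moreover have "ln (real n / real q) = ln (real n) - ln (real q)" using n q by (simp add: ln_div)
    ultimately have "(ln (real n) - ln (real q)) / ln (real n) \<le> ln (real (cover_num f UNIV n e)) / ln (real n)"
      using lnpos by (intro divide_right_mono) simp_all
    moreover have "(ln (real n) - ln (real q)) / ln (real n) = b n" unfolding b_def using lnpos by (simp add: field_simps)
    ultimately show ?thesis by simp
  qed
  then have "limsup (\<lambda>n. ereal (b n)) \<le> limsup (\<lambda>n. ereal (ln (real (cover_num f UNIV n e)) / ln (real n)))"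
    by (intro Limsup_mono eventually_sequentiallyI[of 2]) simp
  moreover have "limsup (\<lambda>n. ereal (b n)) = 1" using limsup_eq_of_tendsto[OF b] by (simp add: one_ereal_def)
  ultimately show ?thesis by simp
qed


lemma hpol_eventually:
  fixes f :: "'a::metric_space \<Rightarrow> 'a"
  assumes "b > 0" "\<And>e. 0 < e \<Longrightarrow> e < b \<Longrightarrow> limsup (\<lambda>n. ereal (ln (real (cover_num f UNIV n e)) / ln (real n))) = l"
  shows "hpol f = l"
proof -
  have "eventually (\<lambda>e. limsup (\<lambda>n. ereal (ln (real (cover_num f UNIV n e)) / ln (real n))) = l) (at_right 0)"
    using eventually_at_right_real[OF assms(1)] by eventually_elim (use assms(2) in auto)
  then have "((\<lambda>e. limsup (\<lambda>n. ereal (ln (real (cover_num f UNIV n e)) / ln (real n)))) \<longlongrightarrow> l) (at_right 0)"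
    by (rule tendsto_eventually)
  then show ?thesis unfolding hpol_def hpol_on_def by (intro tendsto_Lim) simp_all
qed

theorem theorem1:
  fixes f :: "circle \<Rightarrow> circle"
  assumes "orientation_preserving_homeo f"
  shows "(hpol f = 0 \<or> hpol f = 1) \<and>
         (hpol f = 0 \<longleftrightarrow> (\<exists>g. is_rotation g \<and> top_conjugate f g))"
proof -
  obtain F f' where L: "lift F" and fF: "\<And>x. f (circ_proj x) = circ_proj (F x)" and hom: "homeomorphism UNIV UNIV f f'"
    using opf_lift[OF assms] by blast
  interpret lift F by (rule L)
  show ?thesis
  proof (cases "\<exists>g. is_rotation g \<and> top_conjugate f g")
    case True
    then obtain g where g: "is_rotation g" "top_conjugate f g" by blast
    have "hpol f = 0"
    proof (rule hpol_eventually[of 1])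
      fix e :: real assume e: "0 < e" "e < 1"
      obtain K where "\<forall>n\<ge>1. cover_num f UNIV n e \<le> K" using conj_bounded[OF g(2) g(1) e(1)] by blast
      then show "limsup (\<lambda>n. ereal (ln (real (cover_num f UNIV n e)) / ln (real n))) = 0" by (rule phi_zero)
    qed simp
    then show ?thesis using True by simp
  next
    case False
    then have "\<not> good_conj F" using good_conj_imp[OF L fF] by blast
    then obtain q u v where w: "wandering F q u v" using dichotomy by blast
    then have q: "q \<ge> 1" and uv: "u < v" unfolding wandering_def by auto
    have "hpol f = 1"
    proof (rule hpol_eventually[of "(v - u) / 4"])
      show "(v - u) / 4 > 0" using uv by simp
      fix e :: real assume e: "0 < e" "e < (v - u) / 4"
      obtain N where N: "N \<ge> 1" "1 / real N < e" using exists_N[OF e(1)] by blast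
      have "\<forall>n\<ge>1. cover_num f UNIV n e \<le> N * n + 1"
      proof (intro allI impI)
        fix n :: nat assume n: "n \<ge> 1"
        obtain C where C: "finite C" "card C \<le> N * n + 1" "UNIV \<subseteq> (\<Union>c\<in>C. {y. dyn_dist f n c y < e})"
          using upper_cover[OF fF N(1) n N(2)] by blast
        have "cover_num f UNIV n e \<le> card C" using C(1,3) by (rule cover_num_le)
        then show "cover_num f UNIV n e \<le> N * n + 1" using C(2) by (rule le_trans)
      qed
      then have le: "limsup (\<lambda>n. ereal (ln (real (cover_num f UNIV n e)) / ln (real n))) \<le> 1" by (rule phi_le1)
      have e4: "4 * e \<le> v - u" using e(2) by (simp add: field_simps)
      have "\<forall>n\<ge>1. real n \<le> real q * real (cover_num f UNIV n e)"
      proof (intro allI impI)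
        fix n :: nat assume n: "n \<ge> 1"
        show "real n \<le> real q * real (cover_num f UNIV n e)" by (rule lower_cover[OF fF hom w e(1) e4 n])
      qed
      then have ge: "limsup (\<lambda>n. ereal (ln (real (cover_num f UNIV n e)) / ln (real n))) \<ge> 1"
        using q by (rule phi_ge1)
      show "limsup (\<lambda>n. ereal (ln (real (cover_num f UNIV n e)) / ln (real n))) = 1" using le ge by simp
    qed
    then show ?thesis using False by simp
  qed
qed


end
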